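(* In the single expert committee under liquid democracy, there is a neutral strategy profile that maximizes the probability that the outcome matches the state among all neutral strategy profiles and under which (1) the expert votes sincerely, and (2) $1\le v_e\le\min\{\lfloor w^*\rfloor,\ (N+1)/2\}$, where $v_e$ is the number of votes the expert holds and $w^*=\log\big(\tfrac{r}{1-r}\big)/\log\big(\tfrac{q}{1-q}\big)$.
   Context: Single expert committee: $N$ voters with $N$ odd, all independent (payoff 1 if the outcome matches the state, $A$ with $a$ and $B$ with $b$, else 0); $N-1$ nonexperts of precision $q\in(1/2,1)$ and one expert $e$ of precision $r\in(q,1)$; prior $\Pr(\omega=a)=1/2$ for state $\omega\in\{a,b\}$; voter $i$ observes private signal $s_i$ with $\Pr(s_i=\omega\mid\omega)=q_i$, conditionally independent; precisions are common knowledge. Outcome: simple majority of votes cast, ties broken uniformly at random. Liquid democracy: each voter maps her signal to vote $A$, vote $B$, abstain, or delegate to another voter; delegation is transitive, votes in a delegation cycle are abstained, and a non-delegator casts all votes she holds (own plus delegated) for the same alternative or abstains them all. A strategy profile is neutral if each voter votes sincerely ($a$ at signal $a$, $b$ at signal $b$), abstains at both signals, or delegates to the same voter at both signals. The number of votes a voter holds is her own vote (if she does not delegate) plus all votes delegated to her directly or transitively. *)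

theory Defs
  imports Complex_Main
begin

text \<open>Voters are 0, ..., N-1. A neutral strategy of a voter is one of:
  vote sincerely (a at signal a, b at signal b), abstain at both signals,
  or delegate to the same voter j at both signals.\<close>

datatype action = Sincere | Abstain | Deleg nat

definition is_deleg :: "action \<Rightarrow> bool" where
  "is_deleg x = (case x of Deleg _ \<Rightarrow> True | _ \<Rightarrow> False)"

definition neutral :: "nat \<Rightarrow> (nat \<Rightarrow> action) \<Rightarrow> bool" where
  "neutral N s = (\<forall>i<N. \<forall>j. s i = Deleg j \<longrightarrow> j < N \<and> j \<noteq> i)"

definition dstep :: "(nat \<Rightarrow> action) \<Rightarrow> nat \<Rightarrow> nat" where
  "dstep s i = (case s i of Deleg j \<Rightarrow> j | _ \<Rightarrow> i)"

text \<open>After N steps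
  the chain has either reached a non-delegator (where it stays) or is trapped in a
  delegation cycle (in which case the endpoint is a delegator and the vote is abstained).\<close>
definition final :: "nat \<Rightarrow> (nat \<Rightarrow> action) \<Rightarrow> nat \<Rightarrow> nat" where
  "final N s i = (dstep s ^^ N) i"

definition held :: "nat \<Rightarrow> (nat \<Rightarrow> action) \<Rightarrow> nat \<Rightarrow> nat" where
  "held N s j = card {i \<in> {0..<N}. i \<noteq> j \<and> (\<exists>k\<le>N. (dstep s ^^ k) i = j)}
                + (if is_deleg (s j) then 0 else 1)"

text \<open>Given the set S of voters who received signal a: votes cast for A and for B.\<close>
definition votesA :: "nat \<Rightarrow> (nat \<Rightarrow> action) \<Rightarrow> nat set \<Rightarrow> nat" where
  "votesA N s S = card {i \<in> {0..<N}. s (final N s i) = Sincere \<and> final N s i \<in> S}"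

definition votesB :: "nat \<Rightarrow> (nat \<Rightarrow> action) \<Rightarrow> nat set \<Rightarrow> nat" where
  "votesB N s S = card {i \<in> {0..<N}. s (final N s i) = Sincere \<and> final N s i \<notin> S}"

text \<open>Probability that alternative A (resp. B) is chosen: simple majority of votes
  cast, ties broken uniformly at random.\<close>
definition winA :: "nat \<Rightarrow> nat \<Rightarrow> real" where
  "winA x y = (if x > y then 1 else if x = y then 1/2 else 0)"

definition prec :: "nat \<Rightarrow> real \<Rightarrow> real \<Rightarrow> nat \<Rightarrow> real" where
  "prec e q r i = (if i = e then r else q)"

text \<open>Probability of the signal profile in which exactly the voters in S observe a,
  given the state (True = state a, False = state b).\<close>
definition sigprob :: "nat \<Rightarrow> nat \<Rightarrow> real \<Rightarrow> real \<Rightarrow> bool \<Rightarrow> nat set \<Rightarrow> real" where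
  "sigprob N e q r \<omega> S =
     (\<Prod>i\<in>{0..<N}. if (i \<in> S) = \<omega> then prec e q r i else 1 - prec e q r i)"

text \<open>Probability that the outcome matches the state (prior 1/2 on each state).\<close>
definition success :: "nat \<Rightarrow> nat \<Rightarrow> real \<Rightarrow> real \<Rightarrow> (nat \<Rightarrow> action) \<Rightarrow> real" where
  "success N e q r s =
     (1/2) * (\<Sum>S\<in>Pow {0..<N}. sigprob N e q r True S * winA (votesA N s S) (votesB N s S))
   + (1/2) * (\<Sum>S\<in>Pow {0..<N}. sigprob N e q r False S * winA (votesB N s S) (votesA N s S))"

end

theory Submission
  imports Defs
begin


lemma winA_swap: "winA y x = 1 - winA x y"
  by (auto simp: winA_def)

lemma winA_bounds: "0 \<le> winA x y" "winA x y \<le> 1"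
  by (auto simp: winA_def)

definition W :: "nat \<Rightarrow> nat \<Rightarrow> real \<Rightarrow> real \<Rightarrow> (nat \<Rightarrow> nat) \<Rightarrow> real" where
  "W N e q r w = (\<Sum>S\<in>Pow {0..<N}. sigprob N e q r True S *
       winA (\<Sum>j\<in>{0..<N}\<inter>S. w j) (\<Sum>j\<in>{0..<N}-S. w j))"

definition wt :: "nat \<Rightarrow> (nat \<Rightarrow> action) \<Rightarrow> nat \<Rightarrow> nat" where
  "wt N s j = (if s j = Sincere then card {i\<in>{0..<N}. final N s i = j} else 0)"

lemma dstep_range: "neutral N s \<Longrightarrow> i < N \<Longrightarrow> dstep s i < N"
proof -
  assume n: "neutral N s" and i: "i < N"
  show ?thesis
  proof (cases "s i")
    case (Deleg j)
    then have "j < N" using n i unfolding neutral_def by blast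
    then show ?thesis using Deleg by (simp add: dstep_def)
  qed (simp_all add: dstep_def i)
qed

lemma funpow_range: "neutral N s \<Longrightarrow> i < N \<Longrightarrow> (dstep s ^^ k) i < N"
  by (induction k) (simp_all add: dstep_range)

lemma final_range: "neutral N s \<Longrightarrow> i < N \<Longrightarrow> final N s i < N"
  unfolding final_def by (rule funpow_range)

lemma card_fibres:
  assumes "finite A" "finite B" "g ` A \<subseteq> B"
  shows "card {i\<in>A. P (g i)} = (\<Sum>j\<in>{j\<in>B. P j}. card {i\<in>A. g i = j})"
proof -
  have eq: "{i\<in>A. P (g i)} = (\<Union>j\<in>{j\<in>B. P j}. {i\<in>A. g i = j})"
    using assms(3) by auto
  show ?thesis unfolding eq
    by (rule card_UN_disjoint) (use assms in auto)
qed


lemma votesA_wt: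
  assumes "neutral N s"
  shows "votesA N s S = (\<Sum>j\<in>{0..<N}\<inter>S. wt N s j)"
proof -
  have "votesA N s S = card {i\<in>{0..<N}. (\<lambda>j. s j = Sincere \<and> j \<in> S) (final N s i)}"
    by (simp add: votesA_def)
  also have "\<dots> = (\<Sum>j\<in>{j\<in>{0..<N}. s j = Sincere \<and> j \<in> S}. card {i\<in>{0..<N}. final N s i = j})"
    by (rule card_fibres) (use final_range[OF assms] in auto)
  also have "\<dots> = (\<Sum>j\<in>{0..<N}\<inter>S. wt N s j)"
    by (rule sum.mono_neutral_cong_left) (auto simp: wt_def)
  finally show ?thesis .
qed

lemma votesB_wt:
  assumes "neutral N s"
  shows "votesB N s S = (\<Sum>j\<in>{0..<N}-S. wt N s j)"
proof -
  have "votesB N s S = card {i\<in>{0..<N}. (\<lambda>j. s j = Sincere \<and> j \<notin> S) (final N s i)}"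
    by (simp add: votesB_def)
  also have "\<dots> = (\<Sum>j\<in>{j\<in>{0..<N}. s j = Sincere \<and> j \<notin> S}. card {i\<in>{0..<N}. final N s i = j})"
    by (rule card_fibres) (use final_range[OF assms] in auto)
  also have "\<dots> = (\<Sum>j\<in>{0..<N}-S. wt N s j)"
    by (rule sum.mono_neutral_cong_left) (auto simp: wt_def)
  finally show ?thesis .
qed

lemma wt_total:
  assumes "neutral N s"
  shows "(\<Sum>j\<in>{0..<N}. wt N s j) \<le> N"
proof -
  have "(\<Sum>j\<in>{0..<N}. wt N s j) \<le> (\<Sum>j\<in>{0..<N}. card {i\<in>{0..<N}. final N s i = j})"
    by (rule sum_mono) (auto simp: wt_def)
  also have "\<dots> = card {i\<in>{0..<N}. (\<lambda>j. True) (final N s i)}"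
  proof -
    have e: "{j\<in>{0..<N}. True} = {0..<N}" by blast
    have "card {i\<in>{0..<N}. (\<lambda>j. True) (final N s i)} = (\<Sum>j\<in>{j\<in>{0..<N}. True}. card {i\<in>{0..<N}. final N s i = j})"
      by (rule card_fibres) (use final_range[OF assms] in auto)
    then show ?thesis unfolding e by simp
  qed
  finally show ?thesis by simp
qed

lemma sigprob_False:
  assumes "S \<subseteq> {0..<N}"
  shows "sigprob N e q r False S = sigprob N e q r True ({0..<N} - S)"
  unfolding sigprob_def by (rule prod.cong) auto

lemma success_W:
  assumes "neutral N s"
  shows "success N e q r s = W N e q r (wt N s)"
proof -
  let ?A = "{0..<N}"
  let ?f = "\<lambda>S. sigprob N e q r True S * winA (\<Sum>j\<in>?A\<inter>S. wt N s j) (\<Sum>j\<in>?A-S. wt N s j)"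
  have 1: "(\<Sum>S\<in>Pow ?A. sigprob N e q r True S * winA (votesA N s S) (votesB N s S)) = W N e q r (wt N s)"
    unfolding W_def by (simp add: votesA_wt[OF assms] votesB_wt[OF assms])
  have "(\<Sum>S\<in>Pow ?A. sigprob N e q r False S * winA (votesB N s S) (votesA N s S))
      = (\<Sum>S\<in>Pow ?A. sigprob N e q r True (?A - S) * winA (\<Sum>j\<in>?A-S. wt N s j) (\<Sum>j\<in>?A\<inter>S. wt N s j))"
    by (rule sum.cong) (auto simp: sigprob_False votesA_wt[OF assms] votesB_wt[OF assms])
  also have "\<dots> = (\<Sum>S\<in>Pow ?A. ?f S)"
  proof (rule sum.reindex_bij_witness[of _ "\<lambda>S. ?A - S" "\<lambda>S. ?A - S"])
    fix S assume "S \<in> Pow ?A"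
    then have "?A - (?A - S) = S" "?A \<inter> (?A - S) = ?A - S" "?A - S = ?A - S" by auto
    then show "?f (?A - S) = sigprob N e q r True (?A - S) * winA (\<Sum>j\<in>?A-S. wt N s j) (\<Sum>j\<in>?A\<inter>S. wt N s j)"
      by (simp add: Int_commute Diff_Diff_Int)
  qed auto
  finally have 2: "(\<Sum>S\<in>Pow ?A. sigprob N e q r False S * winA (votesB N s S) (votesA N s S)) = W N e q r (wt N s)"
    unfolding W_def .
  show ?thesis unfolding success_def using 1 2 by simp
qed



definition fr :: "nat \<Rightarrow> (nat \<Rightarrow> nat) \<Rightarrow> nat set \<Rightarrow> real" where
  "fr N w S = winA (\<Sum>j\<in>{0..<N}\<inter>S. w j) (\<Sum>j\<in>{0..<N}-S. w j)"

definition flip :: "nat set \<Rightarrow> nat set \<Rightarrow> nat set" where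
  "flip B S = (S - B) \<union> (B - S)"

lemma W_fr: "W N e q r w = (\<Sum>S\<in>Pow {0..<N}. sigprob N e q r True S * fr N w S)"
  unfolding W_def fr_def by (rule refl)

lemma sum_restrict:
  fixes N :: nat and w :: "nat \<Rightarrow> nat"
  assumes "T \<subseteq> {0..<N}" "\<forall>j\<in>{0..<N} - B. w j = 0"
  shows "(\<Sum>j\<in>T. w j) = (\<Sum>j\<in>T \<inter> B. w j)"
proof -
  have f: "finite T" by (rule finite_subset[OF assms(1)]) simp
  have z: "\<forall>j\<in>T - T \<inter> B. w j = 0" using assms by blast
  show ?thesis
    using sum.mono_neutral_right[OF f _ z] by blast
qed

lemma fr_flip:
  assumes "B \<subseteq> {0..<N}" "\<forall>j\<in>{0..<N} - B. w j = 0" "S \<subseteq> {0..<N}"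
  shows "fr N w (flip B S) = 1 - fr N w S"
proof -
  let ?A = "{0..<N}"
  have 1: "(\<Sum>j\<in>?A \<inter> flip B S. w j) = (\<Sum>j\<in>?A - S. w j)"
  proof -
    have "(\<Sum>j\<in>?A \<inter> flip B S. w j) = (\<Sum>j\<in>(?A \<inter> flip B S) \<inter> B. w j)"
      by (rule sum_restrict) (use assms in auto)
    also have "(?A \<inter> flip B S) \<inter> B = (?A - S) \<inter> B" using assms by (auto simp: flip_def)
    also have "(\<Sum>j\<in>(?A - S) \<inter> B. w j) = (\<Sum>j\<in>?A - S. w j)"
      by (rule sum_restrict[symmetric]) (use assms in auto)
    finally show ?thesis .
  qed
  have 2: "(\<Sum>j\<in>?A - flip B S. w j) = (\<Sum>j\<in>?A \<inter> S. w j)"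
  proof -
    have "(\<Sum>j\<in>?A - flip B S. w j) = (\<Sum>j\<in>(?A - flip B S) \<inter> B. w j)"
      by (rule sum_restrict) (use assms in auto)
    also have "(?A - flip B S) \<inter> B = (?A \<inter> S) \<inter> B" using assms by (auto simp: flip_def)
    also have "(\<Sum>j\<in>(?A \<inter> S) \<inter> B. w j) = (\<Sum>j\<in>?A \<inter> S. w j)"
      by (rule sum_restrict[symmetric]) (use assms in auto)
    finally show ?thesis .
  qed
  show ?thesis unfolding fr_def 1 2 by (rule winA_swap)
qed

lemma NP:
  fixes N :: nat and w v :: "nat \<Rightarrow> nat"
  assumes B: "B \<subseteq> {0..<N}"
    and wz: "\<forall>j\<in>{0..<N} - B. w j = 0" and vz: "\<forall>j\<in>{0..<N} - B. v j = 0"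
    and pt: "\<And>S. S \<subseteq> {0..<N} \<Longrightarrow>
      (fr N w S - fr N v S) * (sigprob N e q r True S - sigprob N e q r True (flip B S)) \<le> 0"
  shows "W N e q r w \<le> W N e q r v"
proof -
  let ?A = "{0..<N}"
  let ?p = "sigprob N e q r True"
  define D where "D S = ?p S * (fr N w S - fr N v S)" for S
  have diff: "W N e q r w - W N e q r v = (\<Sum>S\<in>Pow ?A. D S)"
    unfolding W_fr D_def by (simp add: sum_subtractf[symmetric] right_diff_distrib)
  have inv: "flip B (flip B S) = S" for S by (auto simp: flip_def)
  have sub: "S \<subseteq> ?A \<Longrightarrow> flip B S \<subseteq> ?A" for S using B by (auto simp: flip_def)
  have re: "(\<Sum>S\<in>Pow ?A. D S) = (\<Sum>S\<in>Pow ?A. D (flip B S))"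
  proof (rule sum.reindex_bij_witness[of _ "flip B" "flip B"])
    fix S assume "S \<in> Pow ?A" then show "flip B S \<in> Pow ?A" using sub by blast
  qed (simp_all add: inv sub)
  have Dflip: "D (flip B S) = - (?p (flip B S) * (fr N w S - fr N v S))" if "S \<subseteq> ?A" for S
    unfolding D_def fr_flip[OF B wz that] fr_flip[OF B vz that] by (simp add: algebra_simps)
  have "2 * (\<Sum>S\<in>Pow ?A. D S) = (\<Sum>S\<in>Pow ?A. D S) + (\<Sum>S\<in>Pow ?A. D (flip B S))"
    using re by simp
  also have "\<dots> = (\<Sum>S\<in>Pow ?A. D S + D (flip B S))" by (simp add: sum.distrib)
  also have "\<dots> = (\<Sum>S\<in>Pow ?A. (fr N w S - fr N v S) * (?p S - ?p (flip B S)))"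
  proof (rule sum.cong)
    fix S assume "S \<in> Pow ?A"
    then have "D (flip B S) = - (?p (flip B S) * (fr N w S - fr N v S))" using Dflip by blast
    then show "D S + D (flip B S) = (fr N w S - fr N v S) * (?p S - ?p (flip B S))"
      unfolding D_def by (simp add: algebra_simps)
  qed simp
  also have "\<dots> \<le> 0" by (rule sum_nonpos) (use pt in auto)
  finally show ?thesis using diff by simp
qed



lemma prodQ:
  fixes Q T :: "nat set" and q :: real
  assumes "finite Q"
  shows "(\<Prod>i\<in>Q. if i \<in> T then q else 1 - q) = q ^ card (Q \<inter> T) * (1 - q) ^ card (Q - T)"
proof -
  have "(\<Prod>i\<in>Q. if i \<in> T then q else 1 - q) = (\<Prod>i\<in>Q \<inter> {x. x \<in> T}. q) * (\<Prod>i\<in>Q \<inter> - {x. x \<in> T}. 1 - q)"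
    by (rule prod.If_cases[OF assms])
  also have "Q \<inter> {x. x \<in> T} = Q \<inter> T" by blast
  also have "Q \<inter> - {x. x \<in> T} = Q - T" by blast
  finally show ?thesis by simp
qed

lemma sp_gen:
  fixes N e :: nat and Q T :: "nat set" and q r :: real
  assumes e: "e < N" and Q: "Q \<subseteq> {0..<N} - {e}"
  shows "sigprob N e q r True T =
    (\<Prod>i\<in>{0..<N} - insert e Q. if i \<in> T then prec e q r i else 1 - prec e q r i)
    * (if e \<in> T then r else 1 - r) * (q ^ card (Q \<inter> T) * (1 - q) ^ card (Q - T))"
proof -
  let ?g = "\<lambda>i. if i \<in> T then prec e q r i else 1 - prec e q r i"
  have B: "insert e Q \<subseteq> {0..<N}" using e Q by auto
  have fQ: "finite Q" by (rule finite_subset[OF Q]) simp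
  have eQ: "e \<notin> Q" using Q by auto
  have "sigprob N e q r True T = (\<Prod>i\<in>{0..<N}. ?g i)"
    unfolding sigprob_def by simp
  also have "\<dots> = (\<Prod>i\<in>{0..<N} - insert e Q. ?g i) * (\<Prod>i\<in>insert e Q. ?g i)"
    by (rule prod.subset_diff[OF B]) simp
  also have "(\<Prod>i\<in>insert e Q. ?g i) = ?g e * (\<Prod>i\<in>Q. ?g i)"
    by (rule prod.insert[OF fQ eQ])
  also have "(\<Prod>i\<in>Q. ?g i) = (\<Prod>i\<in>Q. if i \<in> T then q else 1 - q)"
    by (rule prod.cong) (use eQ in \<open>auto simp: prec_def\<close>)
  also have "\<dots> = q ^ card (Q \<inter> T) * (1 - q) ^ card (Q - T)"
    by (rule prodQ[OF fQ])
  also have "?g e = (if e \<in> T then r else 1 - r)" by (simp add: prec_def)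
  finally show ?thesis by (simp add: mult.assoc)
qed

lemma sp_diff:
  fixes N e :: nat and Q S :: "nat set" and q r :: real
  assumes e: "e < N" and Q: "Q \<subseteq> {0..<N} - {e}" and S: "S \<subseteq> {0..<N}"
  shows "sigprob N e q r True S - sigprob N e q r True (flip (insert e Q) S) =
    (\<Prod>i\<in>{0..<N} - insert e Q. if i \<in> S then prec e q r i else 1 - prec e q r i)
    * ((if e \<in> S then r else 1 - r) * (q ^ card (Q \<inter> S) * (1 - q) ^ card (Q - S))
      - (if e \<in> S then 1 - r else r) * (q ^ card (Q - S) * (1 - q) ^ card (Q \<inter> S)))"
proof -
  let ?F = "flip (insert e Q) S"
  have eQ: "e \<notin> Q" using Q by auto
  have 1: "(\<Prod>i\<in>{0..<N} - insert e Q. if i \<in> ?F then prec e q r i else 1 - prec e q r i)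
      = (\<Prod>i\<in>{0..<N} - insert e Q. if i \<in> S then prec e q r i else 1 - prec e q r i)"
    by (rule prod.cong) (auto simp: flip_def)
  have 2: "(e \<in> ?F) = (e \<notin> S)" by (auto simp: flip_def)
  have 3: "Q \<inter> ?F = Q - S" using eQ by (auto simp: flip_def)
  have 4: "Q - ?F = Q \<inter> S" using eQ by (auto simp: flip_def)
  show ?thesis
    unfolding sp_gen[OF e Q, of q r S] sp_gen[OF e Q, of q r ?F] 1 2 3 4
    by (simp add: algebra_simps)
qed

lemma Pout_pos:
  fixes N e :: nat and B S :: "nat set" and q r :: real
  assumes "0 < q" "q < 1" "0 < r" "r < 1"
  shows "0 < (\<Prod>i\<in>{0..<N} - B. if i \<in> S then prec e q r i else 1 - prec e q r i)"
  by (rule prod_pos) (use assms in \<open>auto simp: prec_def\<close>)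



lemma Xsign:
  fixes q r :: real and K m :: nat and \<sigma> :: bool
  assumes q: "0 < q" "q < 1" and r: "0 < r" "r < 1" and K: "K \<le> m"
  defines "X \<equiv> (if \<sigma> then r else 1 - r) * (q ^ K * (1 - q) ^ (m - K))
              - (if \<sigma> then 1 - r else r) * (q ^ (m - K) * (1 - q) ^ K)"
    and "E \<equiv> (if \<sigma> then ln r - ln (1 - r) else ln (1 - r) - ln r)
              + (2 * real K - real m) * (ln q - ln (1 - q))"
  shows "0 \<le> E \<Longrightarrow> 0 \<le> X" and "E \<le> 0 \<Longrightarrow> X \<le> 0"
proof -
  define a where "a = (if \<sigma> then r else 1 - r) * (q ^ K * (1 - q) ^ (m - K))"
  define b where "b = (if \<sigma> then 1 - r else r) * (q ^ (m - K) * (1 - q) ^ K)"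
  have q1: "0 < 1 - q" using q by simp
  have r1: "0 < 1 - r" using r by simp
  have c1: "0 < (if \<sigma> then r else 1 - r)" using r r1 by simp
  have c2: "0 < (if \<sigma> then 1 - r else r)" using r r1 by simp
  have a0: "0 < a" unfolding a_def using c1 q q1 by simp
  have b0: "0 < b" unfolding b_def using c2 q q1 by simp
  have la: "ln a = ln (if \<sigma> then r else 1 - r) + (real K * ln q + real (m - K) * ln (1 - q))"
    unfolding a_def using c1 q q1 by (simp add: ln_mult_pos ln_realpow)
  have lb: "ln b = ln (if \<sigma> then 1 - r else r) + (real (m - K) * ln q + real K * ln (1 - q))"
    unfolding b_def using c2 q q1 by (simp add: ln_mult_pos ln_realpow)
  have mk: "real (m - K) = real m - real K" using K by simp
  have lab: "ln a - ln b = E"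
    unfolding la lb E_def mk by (cases \<sigma>) (simp_all add: algebra_simps)
  have X: "X = a - b" unfolding X_def a_def b_def ..
  show "0 \<le> E \<Longrightarrow> 0 \<le> X"
  proof -
    assume "0 \<le> E"
    then have "ln b \<le> ln a" using lab by simp
    then have "b \<le> a" using a0 b0 by simp
    then show ?thesis unfolding X by simp
  qed
  show "E \<le> 0 \<Longrightarrow> X \<le> 0"
  proof -
    assume "E \<le> 0"
    then have "ln a \<le> ln b" using lab by simp
    then have "a \<le> b" using a0 b0 by simp
    then show ?thesis unfolding X by simp
  qed
qed



lemma winA_gt: "x > y \<Longrightarrow> winA x y = 1" and winA_lt: "x < y \<Longrightarrow> winA x y = 0"
  by (auto simp: winA_def)

lemma opt_case:
  fixes c K m :: nat and lam Lam :: real and \<sigma> :: bool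
  assumes K: "K \<le> m" and par: "odd (c + m)" and lam: "0 < lam"
    and lo: "(real c - 1) * lam \<le> Lam" and hi: "Lam \<le> (real c + 1) * lam"
  shows "(winA ((if \<sigma> then c else 0) + K) ((if \<sigma> then 0 else c) + (m - K)) = 1
           \<and> 0 \<le> (if \<sigma> then Lam else - Lam) + (2 * real K - real m) * lam)
       \<or> (winA ((if \<sigma> then c else 0) + K) ((if \<sigma> then 0 else c) + (m - K)) = 0
           \<and> (if \<sigma> then Lam else - Lam) + (2 * real K - real m) * lam \<le> 0)"
proof (cases \<sigma>)
  case True
  have ne: "c + K \<noteq> m - K"
  proof
    assume "c + K = m - K"
    then have "c + m = 2 * (c + K)" using K by arith
    then show False using par by simp
  qed
  show ?thesis
  proof (cases "c + K > m - K")
    case gt: True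
    then have "2 * real K - real m \<ge> 1 - real c" using K by linarith
    then have "(2 * real K - real m) * lam \<ge> (1 - real c) * lam" using lam by (simp add: mult_right_mono)
    then show ?thesis using True gt lo winA_gt[OF gt] by (simp add: algebra_simps)
  next
    case False
    then have lt: "c + K < m - K" using ne by simp
    then have "2 * real K - real m \<le> - 1 - real c" using K by linarith
    then have "(2 * real K - real m) * lam \<le> (- 1 - real c) * lam" using lam by (simp add: mult_right_mono)
    then show ?thesis using True lt hi winA_lt[OF lt] by (simp add: algebra_simps)
  qed
next
  case False
  have ne: "K \<noteq> c + (m - K)"
  proof
    assume "K = c + (m - K)"
    then have "c + m = 2 * K" using K by arith
    then show False using par by simp
  qed
  show ?thesis
  proof (cases "K > c + (m - K)")
    case gt: True
    then have "2 * real K - real m \<ge> 1 + real c" using K by linarith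
    then have "(2 * real K - real m) * lam \<ge> (1 + real c) * lam" using lam by (simp add: mult_right_mono)
    then show ?thesis using False gt hi winA_gt[OF gt] by (simp add: algebra_simps)
  next
    case F2: False
    then have lt: "K < c + (m - K)" using ne by simp
    then have "2 * real K - real m \<le> real c - 1" using K by linarith
    then have "(2 * real K - real m) * lam \<le> (real c - 1) * lam" using lam by (simp add: mult_right_mono)
    then show ?thesis using False lt lo winA_lt[OF lt] by (simp add: algebra_simps)
  qed
qed

lemma env_case:
  fixes N K m xw yw :: nat and lam Lam :: real and \<sigma> :: bool
  assumes K: "K \<le> m" and mN: "m < N" and par: "odd N" and lam: "0 < lam"
    and lo: "(real N - real m - 1) * lam \<le> Lam"
    and tot: "xw + yw \<le> N" and s1: "\<sigma> \<Longrightarrow> m - K \<le> yw" and s0: "\<not> \<sigma> \<Longrightarrow> K \<le> xw"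
  shows "(winA ((if \<sigma> then N - m else 0) + K) ((if \<sigma> then 0 else N - m) + (m - K)) = 1
           \<and> 0 \<le> (if \<sigma> then Lam else - Lam) + (2 * real K - real m) * lam)
       \<or> (winA ((if \<sigma> then N - m else 0) + K) ((if \<sigma> then 0 else N - m) + (m - K)) = 0
           \<and> (if \<sigma> then Lam else - Lam) + (2 * real K - real m) * lam \<le> 0)
       \<or> winA xw yw = winA ((if \<sigma> then N - m else 0) + K) ((if \<sigma> then 0 else N - m) + (m - K))"
proof (cases \<sigma>)
  case True
  have ne: "N - m + K \<noteq> m - K"
  proof
    assume "N - m + K = m - K"
    then have "N = 2 * (m - K)" using K mN by arith
    then show False using par by simp
  qed
  show ?thesis
  proof (cases "N - m + K > m - K")
    case gt: True
    then have "2 * real K - real m \<ge> 1 - (real N - real m)" using K mN by linarith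
    then have "(2 * real K - real m) * lam \<ge> (1 - (real N - real m)) * lam" using lam by (simp add: mult_right_mono)
    then show ?thesis using True gt lo winA_gt[OF gt] by (simp add: algebra_simps)
  next
    case False
    then have lt: "N - m + K < m - K" using ne by simp
    have "m - K \<le> yw" using s1 True by simp
    then have "xw < yw" using tot lt K mN by linarith
    then show ?thesis using True lt winA_lt winA_lt[OF lt] by simp
  qed
next
  case False
  have ne: "K \<noteq> N - m + (m - K)"
  proof
    assume "K = N - m + (m - K)"
    then have "N = 2 * K" using K mN by arith
    then show False using par by simp
  qed
  show ?thesis
  proof (cases "K > N - m + (m - K)")
    case gt: True
    have "K \<le> xw" using s0 False by simp
    then have "xw > yw" using tot gt K mN by linarith
    then show ?thesis using False gt winA_gt winA_gt[OF gt] by simp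
  next
    case F2: False
    then have lt: "K < N - m + (m - K)" using ne by simp
    then have "2 * real K - real m \<le> (real N - real m) - 1" using K mN par by linarith
    then have "(2 * real K - real m) * lam \<le> ((real N - real m) - 1) * lam" using lam by (simp add: mult_right_mono)
    then show ?thesis using False lt lo winA_lt[OF lt] by (simp add: algebra_simps)
  qed
qed



definition wc :: "nat \<Rightarrow> nat \<Rightarrow> nat set \<Rightarrow> nat \<Rightarrow> nat" where
  "wc e c Q j = (if j = e then c else if j \<in> Q then 1 else 0)"

lemma sum_wc:
  fixes T Q :: "nat set"
  assumes fT: "finite T" and eQ: "e \<notin> Q"
  shows "(\<Sum>j\<in>T. wc e c Q j) = (if e \<in> T then c else 0) + card (T \<inter> Q)"
proof -
  have "(\<Sum>j\<in>T. wc e c Q j) = (\<Sum>j\<in>T. (if j = e then c else 0) + (if j \<in> Q then 1 else 0))"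
    by (rule sum.cong) (use eQ in \<open>auto simp: wc_def\<close>)
  also have "\<dots> = (\<Sum>j\<in>T. if j = e then c else 0) + (\<Sum>j\<in>T. if j \<in> Q then 1 else 0)"
    by (rule sum.distrib)
  also have "(\<Sum>j\<in>T. if j = e then c else 0) = (if e \<in> T then c else 0)"
    using fT by (simp add: sum.delta')
  also have "(\<Sum>j\<in>T. if j \<in> Q then (1::nat) else 0) = (\<Sum>j\<in>{x\<in>T. x \<in> Q}. 1)"
    by (rule sum.inter_filter[OF fT, symmetric])
  also have "{x\<in>T. x \<in> Q} = T \<inter> Q" by blast
  also have "(\<Sum>j\<in>T \<inter> Q. (1::nat)) = card (T \<inter> Q)" by simp
  finally show ?thesis .
qed

lemma fr_wc:
  fixes Q S :: "nat set"
  assumes e: "e < N" and Q: "Q \<subseteq> {0..<N} - {e}" and S: "S \<subseteq> {0..<N}"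
  shows "fr N (wc e c Q) S = winA ((if e \<in> S then c else 0) + card (Q \<inter> S))
                                 ((if e \<in> S then 0 else c) + (card Q - card (Q \<inter> S)))"
proof -
  have eQ: "e \<notin> Q" using Q by auto
  have fQ: "finite Q" by (rule finite_subset[OF Q]) simp
  have 1: "(\<Sum>j\<in>{0..<N} \<inter> S. wc e c Q j) = (if e \<in> S then c else 0) + card (Q \<inter> S)"
  proof -
    have "({0..<N} \<inter> S) \<inter> Q = Q \<inter> S" using Q by auto
    moreover have "(e \<in> {0..<N} \<inter> S) = (e \<in> S)" using e by simp
    ultimately show ?thesis using sum_wc[of "{0..<N} \<inter> S" e Q c] eQ by simp
  qed
  have 2: "(\<Sum>j\<in>{0..<N} - S. wc e c Q j) = (if e \<in> S then 0 else c) + (card Q - card (Q \<inter> S))"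
  proof -
    have "({0..<N} - S) \<inter> Q = Q - S" using Q by auto
    moreover have "(e \<in> {0..<N} - S) = (e \<notin> S)" using e by simp
    moreover have "card (Q - S) = card Q - card (Q \<inter> S)"
      by (rule card_Diff_subset_Int) (use fQ in simp)
    ultimately show ?thesis using sum_wc[of "{0..<N} - S" e Q c] eQ by simp
  qed
  show ?thesis unfolding fr_def 1 2 by (rule refl)
qed

lemma pt_crit:
  fixes N e :: nat and Q S :: "nat set" and q r :: real and w v :: "nat \<Rightarrow> nat"
  assumes e: "e < N" and Q: "Q \<subseteq> {0..<N} - {e}" and S: "S \<subseteq> {0..<N}"
    and q: "0 < q" "q < 1" and r: "0 < r" "r < 1"
    and crit: "(fr N v S = 1 \<and> 0 \<le> (if e \<in> S then ln r - ln (1 - r) else - (ln r - ln (1 - r)))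
                 + (2 * real (card (Q \<inter> S)) - real (card Q)) * (ln q - ln (1 - q)))
             \<or> (fr N v S = 0 \<and> (if e \<in> S then ln r - ln (1 - r) else - (ln r - ln (1 - r)))
                 + (2 * real (card (Q \<inter> S)) - real (card Q)) * (ln q - ln (1 - q)) \<le> 0)
             \<or> fr N w S = fr N v S"
  shows "(fr N w S - fr N v S) * (sigprob N e q r True S - sigprob N e q r True (flip (insert e Q) S)) \<le> 0"
proof -
  have fQ: "finite Q" by (rule finite_subset[OF Q]) simp
  let ?K = "card (Q \<inter> S)" and ?m = "card Q"
  have Km: "?K \<le> ?m" by (rule card_mono[OF fQ]) auto
  have cd: "card (Q - S) = ?m - ?K" by (rule card_Diff_subset_Int) (use fQ in simp)
  let ?P = "(\<Prod>i\<in>{0..<N} - insert e Q. if i \<in> S then prec e q r i else 1 - prec e q r i)"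
  let ?X = "(if e \<in> S then r else 1 - r) * (q ^ ?K * (1 - q) ^ (?m - ?K))
              - (if e \<in> S then 1 - r else r) * (q ^ (?m - ?K) * (1 - q) ^ ?K)"
  have P0: "0 < ?P" by (rule Pout_pos) (use q r in auto)
  have D: "sigprob N e q r True S - sigprob N e q r True (flip (insert e Q) S) = ?P * ?X"
    using sp_diff[OF e Q S, of q r] unfolding cd .
  have E: "(if e \<in> S then ln r - ln (1 - r) else - (ln r - ln (1 - r)))
      = (if e \<in> S then ln r - ln (1 - r) else ln (1 - r) - ln r)" by simp
  note X1 = Xsign(1)[OF q r Km, of "e \<in> S"] and X2 = Xsign(2)[OF q r Km, of "e \<in> S"]
  have fw: "0 \<le> fr N w S" "fr N w S \<le> 1" unfolding fr_def by (rule winA_bounds)+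
  from crit show ?thesis
  proof (elim disjE conjE)
    assume v1: "fr N v S = 1" and E0: "0 \<le> (if e \<in> S then ln r - ln (1 - r) else - (ln r - ln (1 - r)))
                 + (2 * real ?K - real ?m) * (ln q - ln (1 - q))"
    have "0 \<le> ?X" using X1 E0 unfolding E by simp
    then have "0 \<le> ?P * ?X" using P0 by simp
    moreover have "fr N w S - fr N v S \<le> 0" using v1 fw by simp
    ultimately show ?thesis unfolding D by (simp add: mult_nonpos_nonneg)
  next
    assume v0: "fr N v S = 0" and E0: "(if e \<in> S then ln r - ln (1 - r) else - (ln r - ln (1 - r)))
                 + (2 * real ?K - real ?m) * (ln q - ln (1 - q)) \<le> 0"
    have "?X \<le> 0" using X2 E0 unfolding E by simp
    then have "?P * ?X \<le> 0" using P0 by (simp add: mult_nonneg_nonpos)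
    moreover have "0 \<le> fr N w S - fr N v S" using v0 fw by simp
    ultimately show ?thesis unfolding D by (simp add: mult_nonneg_nonpos)
  next
    assume "fr N w S = fr N v S"
    then show ?thesis by simp
  qed
qed



lemma wc_zero: "Q \<subseteq> {0..<N} - {e} \<Longrightarrow> \<forall>j\<in>{0..<N} - insert e Q. wc e c Q j = 0"
  by (auto simp: wc_def)

lemma NPopt:
  fixes N e c :: nat and q r :: real and Q :: "nat set" and w :: "nat \<Rightarrow> nat"
  assumes e: "e < N" and Q: "Q \<subseteq> {0..<N} - {e}"
    and q: "0 < q" "q < 1" and r: "0 < r" "r < 1" and lam: "0 < ln q - ln (1 - q)"
    and par: "odd (c + card Q)"
    and lo: "(real c - 1) * (ln q - ln (1 - q)) \<le> ln r - ln (1 - r)"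
    and hi: "ln r - ln (1 - r) \<le> (real c + 1) * (ln q - ln (1 - q))"
    and wz: "\<forall>j\<in>{0..<N} - insert e Q. w j = 0"
  shows "W N e q r w \<le> W N e q r (wc e c Q)"
proof (rule NP[where B = "insert e Q"])
  show "insert e Q \<subseteq> {0..<N}" using e Q by auto
  show "\<forall>j\<in>{0..<N} - insert e Q. w j = 0" by (rule wz)
  show "\<forall>j\<in>{0..<N} - insert e Q. wc e c Q j = 0" by (rule wc_zero[OF Q])
  fix S assume S: "S \<subseteq> {0..<N}"
  have fQ: "finite Q" by (rule finite_subset[OF Q]) simp
  have Km: "card (Q \<inter> S) \<le> card Q" by (rule card_mono[OF fQ]) auto
  note oc = opt_case[OF Km par lam lo hi, of "e \<in> S"]
  show "(fr N w S - fr N (wc e c Q) S) * (sigprob N e q r True S - sigprob N e q r True (flip (insert e Q) S)) \<le> 0"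
    by (rule pt_crit[OF e Q S q r]) (insert oc, unfold fr_wc[OF e Q S], blast)
qed

lemma Env:
  fixes N e :: nat and q r :: real and Q :: "nat set" and w :: "nat \<Rightarrow> nat"
  assumes e: "e < N" and Q: "Q \<subseteq> {0..<N} - {e}"
    and q: "0 < q" "q < 1" and r: "0 < r" "r < 1" and lam: "0 < ln q - ln (1 - q)"
    and par: "odd N" and mN: "card Q < N"
    and lo: "(real N - real (card Q) - 1) * (ln q - ln (1 - q)) \<le> ln r - ln (1 - r)"
    and wz: "\<forall>j\<in>{0..<N} - insert e Q. w j = 0"
    and wpos: "\<forall>j\<in>Q. 1 \<le> w j"
    and tot: "(\<Sum>j\<in>{0..<N}. w j) \<le> N"
  shows "W N e q r w \<le> W N e q r (wc e (N - card Q) Q)"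
proof (rule NP[where B = "insert e Q"])
  show "insert e Q \<subseteq> {0..<N}" using e Q by auto
  show "\<forall>j\<in>{0..<N} - insert e Q. w j = 0" by (rule wz)
  show "\<forall>j\<in>{0..<N} - insert e Q. wc e (N - card Q) Q j = 0" by (rule wc_zero[OF Q])
  fix S assume S: "S \<subseteq> {0..<N}"
  have fQ: "finite Q" by (rule finite_subset[OF Q]) simp
  have Km: "card (Q \<inter> S) \<le> card Q" by (rule card_mono[OF fQ]) auto
  let ?xw = "\<Sum>j\<in>{0..<N} \<inter> S. w j" and ?yw = "\<Sum>j\<in>{0..<N} - S. w j"
  have t: "?xw + ?yw \<le> N"
    using tot sum.Int_Diff[of "{0..<N}" w S] by simp
  have cd: "card (Q - S) = card Q - card (Q \<inter> S)" by (rule card_Diff_subset_Int) (use fQ in simp)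
  have y: "card Q - card (Q \<inter> S) \<le> ?yw"
  proof -
    have "card (Q - S) = (\<Sum>j\<in>Q - S. (1::nat))" by simp
    also have "\<dots> \<le> (\<Sum>j\<in>Q - S. w j)" by (rule sum_mono) (use wpos in auto)
    also have "\<dots> \<le> ?yw" by (rule sum_mono2) (use Q in auto)
    finally show ?thesis using cd by simp
  qed
  have x: "card (Q \<inter> S) \<le> ?xw"
  proof -
    have "card (Q \<inter> S) = (\<Sum>j\<in>Q \<inter> S. (1::nat))" by simp
    also have "\<dots> \<le> (\<Sum>j\<in>Q \<inter> S. w j)" by (rule sum_mono) (use wpos in auto)
    also have "\<dots> \<le> ?xw" by (rule sum_mono2) (use Q in auto)
    finally show ?thesis .
  qed
  have y': "e \<in> S \<Longrightarrow> card Q - card (Q \<inter> S) \<le> ?yw" using y by simp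
  have x': "\<not> e \<in> S \<Longrightarrow> card (Q \<inter> S) \<le> ?xw" using x by simp
  note ec = env_case[OF Km mN par lam lo t y' x']
  show "(fr N w S - fr N (wc e (N - card Q) Q) S) * (sigprob N e q r True S - sigprob N e q r True (flip (insert e Q) S)) \<le> 0"
    by (rule pt_crit[OF e Q S q r]) (insert ec, unfold fr_wc[OF e Q S] fr_def[of N w S], blast)
qed



lemma extend_set:
  fixes B Q :: "nat set"
  assumes fB: "finite B" and QB: "Q \<subseteq> B" and n1: "card Q \<le> n" and n2: "n \<le> card B"
  obtains Q2 where "Q \<subseteq> Q2" "Q2 \<subseteq> B" "card Q2 = n"
proof -
  have fQ: "finite Q" using fB QB by (rule finite_subset[rotated])
  have "card (B - Q) = card B - card Q" by (rule card_Diff_subset[OF fQ QB])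
  then have "n - card Q \<le> card (B - Q)" using n2 by simp
  then obtain T where T: "T \<subseteq> B - Q" "card T = n - card Q" "finite T"
    by (rule obtain_subset_with_card_n)
  have "card (Q \<union> T) = card Q + card T"
    by (rule card_Un_disjoint) (use fQ T in auto)
  then have "card (Q \<union> T) = n" using T n1 by simp
  moreover have "Q \<subseteq> Q \<union> T" "Q \<union> T \<subseteq> B" using T QB by auto
  ultimately show ?thesis using that by blast
qed

lemma fr_dict:
  fixes Q S :: "nat set"
  assumes e: "e < N" and Q: "Q \<subseteq> {0..<N} - {e}" and S: "S \<subseteq> {0..<N}" and c: "card Q < c"
  shows "fr N (wc e c Q) S = (if e \<in> S then 1 else 0)"
proof -
  have fQ: "finite Q" by (rule finite_subset[OF Q]) simp
  have Km: "card (Q \<inter> S) \<le> card Q" by (rule card_mono[OF fQ]) auto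
  show ?thesis
  proof (cases "e \<in> S")
    case True
    have "c + card (Q \<inter> S) > card Q - card (Q \<inter> S)" using c by linarith
    then show ?thesis using True unfolding fr_wc[OF e Q S] by (simp add: winA_gt)
  next
    case False
    have "card (Q \<inter> S) < c + (card Q - card (Q \<inter> S))" using c Km by linarith
    then show ?thesis using False unfolding fr_wc[OF e Q S] by (simp add: winA_lt)
  qed
qed

lemma W_dict:
  fixes Q Q' :: "nat set"
  assumes e: "e < N" and Q: "Q \<subseteq> {0..<N} - {e}" and Q': "Q' \<subseteq> {0..<N} - {e}"
    and c: "card Q < c" and c': "card Q' < c'"
  shows "W N e q r (wc e c Q) = W N e q r (wc e c' Q')"
  unfolding W_fr
  by (rule sum.cong[OF refl]) (simp add: fr_dict[OF e Q _ c] fr_dict[OF e Q' _ c'])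

definition member :: "nat \<Rightarrow> nat \<Rightarrow> nat \<Rightarrow> nat \<Rightarrow> nat set \<Rightarrow> bool" where
  "member N e F c Q = (1 \<le> c \<and> c \<le> F \<and> c \<le> (N + 1) div 2 \<and> Q \<subseteq> {0..<N} - {e} \<and> card Q = N - c)"

lemma card_nonexp: "e < N \<Longrightarrow> card ({0..<N} - {e}) = N - 1"
  by simp

lemma odd_half:
  fixes N :: nat
  assumes "odd N"
  shows "(N + 1) div 2 = Suc ((N - 1) div 2)" "N - (N + 1) div 2 = (N - 1) div 2"
    "(N + 1) div 2 \<le> N" "1 \<le> (N + 1) div 2"
  using assms by (auto elim!: oddE)

lemma DictAdj:
  fixes Q :: "nat set"
  assumes N: "odd N" and e: "e < N" and c1: "1 \<le> c" and cF: "c \<le> F" and cN: "c \<le> N"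
    and Q: "Q \<subseteq> {0..<N} - {e}" and cQ: "card Q = N - c"
  shows "\<exists>c0 Q0. member N e F c0 Q0 \<and> W N e q r (wc e c Q) \<le> W N e q r (wc e c0 Q0)"
proof (cases "c \<le> (N + 1) div 2")
  case True
  then show ?thesis using c1 cF Q cQ unfolding member_def by blast
next
  case False
  have "card Q \<le> (N - 1) div 2" using False cQ N by linarith
  moreover have "(N - 1) div 2 \<le> card ({0..<N} - {e})" using e by simp
  ultimately obtain Q0 where Q0: "Q \<subseteq> Q0" "Q0 \<subseteq> {0..<N} - {e}" "card Q0 = (N - 1) div 2"
    using extend_set[of "{0..<N} - {e}" Q "(N - 1) div 2"] Q by auto
  have eq: "W N e q r (wc e c Q) = W N e q r (wc e ((N + 1) div 2) Q0)"
  proof (rule W_dict[OF e Q Q0(2)])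
    show "card Q < c" using False cQ N by linarith
    show "card Q0 < (N + 1) div 2" using Q0(3) odd_half[OF N] by simp
  qed
  have "member N e F ((N + 1) div 2) Q0"
    unfolding member_def using Q0 False cF odd_half[OF N] by auto
  then show ?thesis using eq by auto
qed



lemma wc_zero_sub: "Q \<subseteq> Q2 \<Longrightarrow> \<forall>j\<in>{0..<N} - insert e Q2. wc e c Q j = 0"
  by (auto simp: wc_def)

lemma bounds_c:
  fixes F c :: nat and L1 L2 :: real
  assumes L1: "0 < L1" and lo: "real F * L1 \<le> L2" and hi: "L2 \<le> (real F + 1) * L1"
    and c: "c = F \<or> c = F + 1"
  shows "(real c - 1) * L1 \<le> L2" "L2 \<le> (real c + 1) * L1"
proof -
  have a: "(real F - 1) * L1 \<le> real F * L1" using L1 by (simp add: algebra_simps)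
  have b: "(real F + 1) * L1 \<le> (real F + 2) * L1" using L1 by (simp add: algebra_simps)
  show "(real c - 1) * L1 \<le> L2" using c a lo by auto
  show "L2 \<le> (real c + 1) * L1"
  proof (cases "c = F")
    case True then show ?thesis using hi by simp
  next
    case False
    then have "real F + 1 \<le> real c + 1" using c by simp
    then have "(real F + 1) * L1 \<le> (real c + 1) * L1" by (rule mult_right_mono[OF _ less_imp_le[OF L1]])
    then show ?thesis using hi by linarith
  qed
qed

lemma Step1:
  fixes N e F c :: nat and q r :: real and Q :: "nat set"
  assumes N: "odd N" and e: "e < N" and q: "0 < q" "q < 1" and r: "0 < r" "r < 1"
    and L1: "0 < ln q - ln (1 - q)" and F1: "1 \<le> F"
    and lo: "real F * (ln q - ln (1 - q)) \<le> ln r - ln (1 - r)"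
    and hi: "ln r - ln (1 - r) \<le> (real F + 1) * (ln q - ln (1 - q))"
    and c: "c = F \<or> c = F + 1" and cN: "c \<le> N"
    and Q: "Q \<subseteq> {0..<N} - {e}" and par: "odd (c + card Q)" and cQ: "card Q \<le> N - c"
  shows "\<exists>c0 Q0. member N e F c0 Q0 \<and> W N e q r (wc e c Q) \<le> W N e q r (wc e c0 Q0)"
proof -
  have fB: "finite ({0..<N} - {e})" by simp
  have cB: "card ({0..<N} - {e}) = N - 1" using e by simp
  have n2: "N - c \<le> card ({0..<N} - {e})" using cB c F1 by auto
  obtain Q2 where Q2: "Q \<subseteq> Q2" "Q2 \<subseteq> {0..<N} - {e}" "card Q2 = N - c"
    by (rule extend_set[OF fB Q cQ n2])
  note bc = bounds_c[OF L1 lo hi c]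
  have par2: "odd (c + card Q2)" using Q2(3) cN N by simp
  have 1: "W N e q r (wc e c Q) \<le> W N e q r (wc e c Q2)"
    by (rule NPopt[OF e Q2(2) q r L1 par2 bc wc_zero_sub[OF Q2(1)]])
  show ?thesis
  proof (cases "c = F")
    case True
    have "\<exists>c0 Q0. member N e F c0 Q0 \<and> W N e q r (wc e c Q2) \<le> W N e q r (wc e c0 Q0)"
      by (rule DictAdj[OF N e]) (use True F1 cN Q2 in auto)
    then show ?thesis using 1 by (meson order_trans)
  next
    case False
    then have cF: "c = F + 1" using c by simp
    have n3a: "card Q2 \<le> N - F" using Q2(3) cF by simp
    have n3b: "N - F \<le> card ({0..<N} - {e})" using cB F1 by simp
    obtain Q3 where Q3: "Q2 \<subseteq> Q3" "Q3 \<subseteq> {0..<N} - {e}" "card Q3 = N - F"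
      by (rule extend_set[OF fB Q2(2) n3a n3b])
    note bF = bounds_c[OF L1 lo hi, of F]
    have par3: "odd (F + card Q3)" using Q3(3) cN cF N by simp
    have 2: "W N e q r (wc e c Q2) \<le> W N e q r (wc e F Q3)"
      by (rule NPopt[OF e Q3(2) q r L1 par3 bF wc_zero_sub[OF Q3(1)]]) simp_all
    have "\<exists>c0 Q0. member N e F c0 Q0 \<and> W N e q r (wc e F Q3) \<le> W N e q r (wc e c0 Q0)"
      by (rule DictAdj[OF N e]) (use F1 cN cF Q3 in auto)
    then show ?thesis using 1 2 by (meson order_trans)
  qed
qed

lemma key:
  fixes N e F :: nat and q r :: real and w :: "nat \<Rightarrow> nat"
  assumes N: "odd N" and e: "e < N" and q: "0 < q" "q < 1" and r: "0 < r" "r < 1"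
    and L1: "0 < ln q - ln (1 - q)" and F1: "1 \<le> F"
    and lo: "real F * (ln q - ln (1 - q)) \<le> ln r - ln (1 - r)"
    and hi: "ln r - ln (1 - r) \<le> (real F + 1) * (ln q - ln (1 - q))"
    and tot: "(\<Sum>j\<in>{0..<N}. w j) \<le> N"
  shows "\<exists>c0 Q0. member N e F c0 Q0 \<and> W N e q r w \<le> W N e q r (wc e c0 Q0)"
proof -
  define Q where "Q = {j\<in>{0..<N}. j \<noteq> e \<and> 0 < w j}"
  have Q: "Q \<subseteq> {0..<N} - {e}" unfolding Q_def by auto
  have mN: "card Q \<le> N - 1"
    using card_mono[OF _ Q] e by simp
  have wz: "\<forall>j\<in>{0..<N} - insert e Q. w j = 0" unfolding Q_def by auto
  have wpos: "\<forall>j\<in>Q. 1 \<le> w j" unfolding Q_def by auto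
  show ?thesis
  proof (cases "N - card Q \<le> F + 1")
    case True
    have "real N - real (card Q) - 1 \<le> real F" using True mN e by linarith
    then have "(real N - real (card Q) - 1) * (ln q - ln (1 - q)) \<le> real F * (ln q - ln (1 - q))"
      using L1 by (simp add: mult_right_mono)
    then have loE: "(real N - real (card Q) - 1) * (ln q - ln (1 - q)) \<le> ln r - ln (1 - r)"
      using lo by linarith
    have 1: "W N e q r w \<le> W N e q r (wc e (N - card Q) Q)"
      by (rule Env[OF e Q q r L1 N _ loE wz wpos tot]) (use mN e in linarith)
    show ?thesis
    proof (cases "N - card Q \<le> F")
      case True
      have "\<exists>c0 Q0. member N e F c0 Q0 \<and> W N e q r (wc e (N - card Q) Q) \<le> W N e q r (wc e c0 Q0)"
        by (rule DictAdj[OF N e]) (use True mN e Q in auto)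
      then show ?thesis using 1 by (meson order_trans)
    next
      case False
      then have eqc: "N - card Q = F + 1" using \<open>N - card Q \<le> F + 1\<close> by simp
      have "F + 1 + card Q = N" using eqc mN by arith
      then have parF: "odd (F + 1 + card Q)" using N by simp
      have "\<exists>c0 Q0. member N e F c0 Q0 \<and> W N e q r (wc e (F + 1) Q) \<le> W N e q r (wc e c0 Q0)"
        by (rule Step1[OF N e q r L1 F1 lo hi _ _ Q parF]) (use eqc mN e N in auto)
      then show ?thesis using 1 eqc by (metis order_trans)
    qed
  next
    case False
    define c where "c = (if odd (F + card Q) then F else F + 1)"
    have c: "c = F \<or> c = F + 1" unfolding c_def by simp
    have par: "odd (c + card Q)" unfolding c_def by (cases "odd (F + card Q)") simp_all
    have cQ: "card Q \<le> N - c" using False c by auto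
    have cN: "c \<le> N" using False c by auto
    have 1: "W N e q r w \<le> W N e q r (wc e c Q)"
      by (rule NPopt[OF e Q q r L1 par bounds_c[OF L1 lo hi c] wz])
    have "\<exists>c0 Q0. member N e F c0 Q0 \<and> W N e q r (wc e c Q) \<le> W N e q r (wc e c0 Q0)"
      by (rule Step1[OF N e q r L1 F1 lo hi c cN Q par cQ])
    then show ?thesis using 1 by (meson order_trans)
  qed
qed



definition scan :: "nat \<Rightarrow> nat set \<Rightarrow> nat \<Rightarrow> action" where
  "scan e Q j = (if j = e \<or> j \<in> Q then Sincere else Deleg e)"

lemma scan_neutral: "e < N \<Longrightarrow> neutral N (scan e Q)"
  unfolding neutral_def scan_def by auto

lemma scan_dstep: "dstep (scan e Q) i = (if i = e \<or> i \<in> Q then i else e)"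
  by (simp add: dstep_def scan_def)

lemma scan_pow: "(dstep (scan e Q) ^^ Suc k) i = (if i = e \<or> i \<in> Q then i else e)"
  by (induction k) (simp_all add: scan_dstep)

lemma scan_final: "0 < N \<Longrightarrow> final N (scan e Q) i = (if i = e \<or> i \<in> Q then i else e)"
  unfolding final_def using scan_pow[where e=e and Q=Q and k="N - 1" and i=i] by simp

lemma scan_held:
  fixes Q :: "nat set"
  assumes e: "e < N" and Q: "Q \<subseteq> {0..<N} - {e}"
  shows "held N (scan e Q) e = N - card Q"
proof -
  have eQ: "e \<notin> Q" using Q by auto
  have fQ: "finite Q" by (rule finite_subset[OF Q]) simp
  have set: "{i\<in>{0..<N}. i \<noteq> e \<and> (\<exists>k\<le>N. (dstep (scan e Q) ^^ k) i = e)} = {0..<N} - insert e Q"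
  proof (intro equalityI subsetI)
    fix i assume i: "i \<in> {i\<in>{0..<N}. i \<noteq> e \<and> (\<exists>k\<le>N. (dstep (scan e Q) ^^ k) i = e)}"
    then obtain k where k: "(dstep (scan e Q) ^^ k) i = e" by blast
    have "i \<notin> Q"
    proof
      assume iQ: "i \<in> Q"
      have "(dstep (scan e Q) ^^ k) i = i"
      proof (cases k)
        case 0 then show ?thesis by simp
      next
        case (Suc k') then show ?thesis using scan_pow[where e=e and Q=Q and k=k' and i=i] iQ by simp
      qed
      then show False using k i by simp
    qed
    then show "i \<in> {0..<N} - insert e Q" using i by simp
  next
    fix i assume i: "i \<in> {0..<N} - insert e Q"
    have "(dstep (scan e Q) ^^ Suc 0) i = e" using scan_pow[where e=e and Q=Q and k=0 and i=i] i by simp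
    moreover have "Suc 0 \<le> N" using e by simp
    ultimately show "i \<in> {i\<in>{0..<N}. i \<noteq> e \<and> (\<exists>k\<le>N. (dstep (scan e Q) ^^ k) i = e)}"
      using i by blast
  qed
  have sub: "insert e Q \<subseteq> {0..<N}" using e Q by auto
  have c1: "card (insert e Q) = card Q + 1" using fQ eQ by simp
  have "card ({0..<N} - insert e Q) = N - (card Q + 1)"
    using card_Diff_subset[OF _ sub] fQ c1 by simp
  moreover have "card Q + 1 \<le> N" using card_mono[OF _ sub] c1 by simp
  moreover have "\<not> is_deleg (scan e Q e)" by (simp add: scan_def is_deleg_def)
  ultimately show ?thesis unfolding held_def set by simp
qed

lemma scan_wt:
  fixes Q :: "nat set"
  assumes e: "e < N" and Q: "Q \<subseteq> {0..<N} - {e}"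
  shows "wt N (scan e Q) j = wc e (N - card Q) Q j"
proof -
  have eQ: "e \<notin> Q" using Q by auto
  have fQ: "finite Q" by (rule finite_subset[OF Q]) simp
  have N0: "0 < N" using e by simp
  note fin = scan_final[OF N0, of e Q]
  show ?thesis
  proof (cases "j = e")
    case True
    have "{i\<in>{0..<N}. final N (scan e Q) i = j} = {0..<N} - Q"
      using True eQ by (auto simp: fin)
    moreover have "card ({0..<N} - Q) = N - card Q"
    proof -
      have "Q \<subseteq> {0..<N}" using Q by auto
      then show ?thesis using card_Diff_subset[OF fQ] by simp
    qed
    ultimately show ?thesis using True by (simp add: wt_def wc_def scan_def)
  next
    case False
    show ?thesis
    proof (cases "j \<in> Q")
      case True
      have "{i\<in>{0..<N}. final N (scan e Q) i = j} = {j}"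
        using True False Q by (auto simp: fin)
      then show ?thesis using True False by (simp add: wt_def wc_def scan_def)
    next
      case F2: False
      then show ?thesis using False by (simp add: wt_def wc_def scan_def)
    qed
  qed
qed



theorem lemma5:
  fixes N e :: nat and q r :: real
  assumes "odd N" and "e < N"
    and "1/2 < q" and "q < r" and "r < 1"
  shows "\<exists>s. neutral N s
           \<and> (\<forall>s'. neutral N s' \<longrightarrow> success N e q r s' \<le> success N e q r s)
           \<and> s e = Sincere
           \<and> 1 \<le> held N s e
           \<and> int (held N s e) \<le> \<lfloor>ln (r / (1 - r)) / ln (q / (1 - q))\<rfloor>
           \<and> held N s e \<le> (N + 1) div 2"
proof -
  note N = assms(1) and e = assms(2)
  have q: "0 < q" "q < 1" using assms by auto
  have r: "0 < r" "r < 1" using assms by auto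
  define L1 where "L1 = ln q - ln (1 - q)"
  define L2 where "L2 = ln r - ln (1 - r)"
  have L1pos: "0 < L1"
  proof -
    have "1 - q < q" using assms by simp
    then have "ln (1 - q) < ln q" using q by simp
    then show ?thesis unfolding L1_def by simp
  qed
  have L12: "L1 < L2"
  proof -
    have "ln q < ln r" using assms q by simp
    moreover have "ln (1 - r) < ln (1 - q)" using assms r by simp
    ultimately show ?thesis unfolding L1_def L2_def by simp
  qed
  have fl: "ln (r / (1 - r)) / ln (q / (1 - q)) = L2 / L1"
    unfolding L1_def L2_def using q r by (simp add: ln_divide_pos)
  define z where "z = \<lfloor>L2 / L1\<rfloor>"
  have gt1: "1 < L2 / L1" using L1pos L12 by simp
  have z1: "1 \<le> z" unfolding z_def using gt1 by linarith
  define F where "F = nat z"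
  have Fz: "real F = real_of_int z" unfolding F_def using z1 by simp
  have F1: "1 \<le> F" unfolding F_def using z1 by simp
  have "real F \<le> L2 / L1" using Fz unfolding z_def by simp
  then have lo: "real F * L1 \<le> L2" using L1pos by (simp add: pos_le_divide_eq)
  have "L2 / L1 < real F + 1" using Fz unfolding z_def by linarith
  then have hi0: "L2 < (real F + 1) * L1" using L1pos by (simp add: pos_divide_less_eq)
  then have hi: "L2 \<le> (real F + 1) * L1" by simp
  define Fam where "Fam = {p. member N e F (fst p) (snd p)}"
  define g where "g p = W N e q r (wc e (fst p) (snd p))" for p
  have finFam: "finite Fam"
  proof (rule finite_subset)
    show "Fam \<subseteq> {0..N} \<times> Pow {0..<N}"
      unfolding Fam_def member_def using odd_half[OF N] by auto
  qed simp
  have memb1: "member N e F 1 ({0..<N} - {e})"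
    unfolding member_def using F1 e odd_half[OF N] by auto
  then have neFam: "Fam \<noteq> {}" unfolding Fam_def by auto
  define M where "M = Max (g ` Fam)"
  have "M \<in> g ` Fam" unfolding M_def using finFam neFam by simp
  then obtain p0 where p0: "p0 \<in> Fam" "g p0 = M" by auto
  have Mmax: "g p \<le> M" if "p \<in> Fam" for p
    unfolding M_def using finFam that by simp
  obtain c0 Q0 where p0eq: "p0 = (c0, Q0)" by (cases p0)
  have mem0: "member N e F c0 Q0" using p0 p0eq unfolding Fam_def by simp
  then have c01: "1 \<le> c0" and c0F: "c0 \<le> F" and c0h: "c0 \<le> (N + 1) div 2"
    and Q0: "Q0 \<subseteq> {0..<N} - {e}" and cQ0: "card Q0 = N - c0"
    unfolding member_def by auto
  have c0N: "c0 \<le> N" using c0h odd_half[OF N] by linarith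
  define s where "s = scan e Q0"
  have held: "held N s e = c0" unfolding s_def using scan_held[OF e Q0] cQ0 c0N by simp
  have wts: "wt N s = wc e c0 Q0"
    unfolding s_def using scan_wt[OF e Q0] cQ0 c0N by (simp add: fun_eq_iff)
  have succ_s: "success N e q r s = M"
  proof -
    have "success N e q r s = W N e q r (wt N s)" by (rule success_W) (simp add: s_def scan_neutral[OF e])
    also have "\<dots> = g p0" unfolding wts g_def p0eq by simp
    finally show ?thesis using p0 by simp
  qed
  have opt: "success N e q r s' \<le> success N e q r s" if ns: "neutral N s'" for s'
  proof -
    have "\<exists>c1 Q1. member N e F c1 Q1 \<and> W N e q r (wt N s') \<le> W N e q r (wc e c1 Q1)"
      by (rule key[OF N e q r L1pos[unfolded L1_def] F1 lo[unfolded L1_def L2_def]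
            hi[unfolded L1_def L2_def] wt_total[OF ns]])
    then obtain c1 Q1 where m1: "member N e F c1 Q1" and le1: "W N e q r (wt N s') \<le> W N e q r (wc e c1 Q1)"
      by blast
    have "(c1, Q1) \<in> Fam" using m1 unfolding Fam_def by simp
    then have "W N e q r (wc e c1 Q1) \<le> M" using Mmax unfolding g_def by fastforce
    then show ?thesis using le1 success_W[OF ns] succ_s by simp
  qed
  have "int c0 \<le> z" using c0F z1 unfolding F_def by (simp add: le_nat_iff)
  then have fl2: "int (held N s e) \<le> \<lfloor>ln (r / (1 - r)) / ln (q / (1 - q))\<rfloor>"
    unfolding held fl z_def .
  show ?thesis
    apply (rule exI[of _ s])
    using scan_neutral[OF e, of Q0] opt held c01 c0h fl2
    by (simp add: s_def scan_def)
qed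

end
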